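(* Let $u_{\varepsilon,\ell}$ be a 3iet word with parameters $\varepsilon,\ell$ and let ${\rm ind}(u_{\varepsilon,\ell})=+\infty$. Then $\sup_{n\in\mathbb N} a_n = +\infty$, where $a_n$ are the partial quotients of the continued fraction $\varepsilon=[0,a_1,a_2,\dots]$.
   Context: Parameters $\varepsilon,\ell$ satisfy $\varepsilon\in(0,1)\setminus\mathbb Q$ and $\max\{\varepsilon,1-\varepsilon\}<\ell<1$. The three interval exchange $T_{\varepsilon,\ell}:[0,\ell)\to[0,\ell)$ is defined by $T_{\varepsilon,\ell}(x)=x+1-\varepsilon$ for $x\in I_A:=[0,\ell-1+\varepsilon)$, $T_{\varepsilon,\ell}(x)=x+1-2\varepsilon$ for $x\in I_B:=[\ell-1+\varepsilon,\varepsilon)$, and $T_{\varepsilon,\ell}(x)=x-\varepsilon$ for $x\in I_C:=[\varepsilon,\ell)$. A 3iet word with parameters $\varepsilon,\ell$ is the word $u=(u_n)_{n\in\mathbb N}$ over $\{A,B,C\}$ with $u_n=X$ iff $T_{\varepsilon,\ell}^n(x_0)\in I_X$, for some $x_0\in[0,\ell)$; its language and index do not depend on $x_0$. A word $v$ is a power $w^r$ ($r=|v|/|w|$) if $|v|\ge|w|$ and $v$ is a prefix of $www\cdots$; ${\rm ind}(w)=\sup\{r\in\mathbb Q: w^r \text{ is a factor of } u\}$ and ${\rm ind}(u)=\sup\{{\rm ind}(w): w \text{ a factor of } u\}$. *)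

theory Defs
  imports Complex_Main "HOL-Library.Extended_Real"
begin

datatype letter = A | B | C

definition T3 :: "real \<Rightarrow> real \<Rightarrow> real \<Rightarrow> real" where
  "T3 eps l x =
     (if 0 \<le> x \<and> x < l - 1 + eps then x + 1 - eps
      else if l - 1 + eps \<le> x \<and> x < eps then x + 1 - 2 * eps
      else x - eps)"

definition code3 :: "real \<Rightarrow> real \<Rightarrow> real \<Rightarrow> letter" where
  "code3 eps l x =
     (if 0 \<le> x \<and> x < l - 1 + eps then A
      else if l - 1 + eps \<le> x \<and> x < eps then B
      else C)"

definition iet_word :: "real \<Rightarrow> real \<Rightarrow> real \<Rightarrow> nat \<Rightarrow> letter" where
  "iet_word eps l x0 n = code3 eps l ((T3 eps l ^^ n) x0)"

definition is_factor :: "(nat \<Rightarrow> 'a) \<Rightarrow> 'a list \<Rightarrow> bool" where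
  "is_factor u v \<longleftrightarrow> (\<exists>i. v = map u [i..<i + length v])"

definition is_power :: "'a list \<Rightarrow> 'a list \<Rightarrow> rat \<Rightarrow> bool" where
  "is_power v w r \<longleftrightarrow> w \<noteq> [] \<and> length w \<le> length v \<and>
     r = of_nat (length v) / of_nat (length w) \<and>
     (\<forall>k < length v. v ! k = w ! (k mod length w))"

definition ind_word :: "(nat \<Rightarrow> 'a) \<Rightarrow> 'a list \<Rightarrow> ereal" where
  "ind_word u w = Sup {ereal (real_of_rat r) | r. \<exists>v. is_factor u v \<and> is_power v w r}"

definition ind_inf :: "(nat \<Rightarrow> 'a) \<Rightarrow> ereal" where
  "ind_inf u = Sup {ind_word u w | w. w \<noteq> [] \<and> is_factor u w}"

text \<open>Continued fraction of x in (0,1): x = [0; a_1, a_2, ...] via the Gauss map.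
  cf_rem x k is the k-th remainder (cf_rem x 0 = x), and a_n = floor(1 / cf_rem x (n-1)) for n >= 1.\<close>
fun cf_rem :: "real \<Rightarrow> nat \<Rightarrow> real" where
  "cf_rem x 0 = x"
| "cf_rem x (Suc k) = frac (1 / cf_rem x k)"

definition cf_pq :: "real \<Rightarrow> nat \<Rightarrow> int" where
  "cf_pq x n = \<lfloor>1 / cf_rem x (n - 1)\<rfloor>"

end

theory Submission
  imports Defs
begin


lemma cf_rem_props:
  assumes "0 < e" "e < 1" "e \<notin> \<rat>"
  shows "0 < cf_rem e k \<and> cf_rem e k < 1 \<and> cf_rem e k \<notin> \<rat>"
proof (induction k)
  case 0 then show ?case using assms by simp
next
  case (Suc k)
  define r where "r = cf_rem e k"
  have r: "0 < r" "r < 1" "r \<notin> \<rat>" using Suc r_def by auto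
  have ir: "1/r \<notin> \<rat>"
  proof
    assume "1/r \<in> \<rat>" then have "1/(1/r) \<in> \<rat>" by (rule Rats_divide[OF Rats_1])
    then show False using r by simp
  qed
  have nz: "1/r \<notin> \<int>" using ir Ints_subset_Rats by blast
  have "frac (1/r) \<notin> \<rat>"
  proof
    assume h: "frac (1/r) \<in> \<rat>"
    have "1/r = frac (1/r) + of_int \<lfloor>1/r\<rfloor>" by (simp add: frac_def)
    also have "\<dots> \<in> \<rat>" using h by simp
    finally show False using ir by simp
  qed
  then show ?case using nz by (simp add: r_def[symmetric] frac_lt_1)
qed

definition aa :: "real \<Rightarrow> nat \<Rightarrow> int" where "aa e j = \<lfloor>1 / cf_rem e j\<rfloor>"

fun QQ :: "real \<Rightarrow> nat \<Rightarrow> int" where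
  "QQ e 0 = 0" | "QQ e (Suc 0) = 1" | "QQ e (Suc (Suc k)) = aa e k * QQ e (Suc k) + QQ e k"
fun PP :: "real \<Rightarrow> nat \<Rightarrow> int" where
  "PP e 0 = 1" | "PP e (Suc 0) = 0" | "PP e (Suc (Suc k)) = aa e k * PP e (Suc k) + PP e k"
fun Bt :: "real \<Rightarrow> nat \<Rightarrow> real" where
  "Bt e 0 = 1" | "Bt e (Suc k) = Bt e k * cf_rem e k"

lemma find_step:
  fixes f :: "nat \<Rightarrow> int"
  assumes "a < b" "f a \<le> x" "x < f b"
  shows "\<exists>k. a \<le> k \<and> k < b \<and> f k \<le> x \<and> x < f (Suc k)"
  using assms
proof (induction b)
  case 0 then show ?case by simp
next
  case (Suc b)
  show ?case
  proof (cases "a = b")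
    case True then show ?thesis using Suc by auto
  next
    case False
    show ?thesis
    proof (cases "x < f b")
      case True then show ?thesis using Suc False by (metis less_Suc_eq less_SucE)
    next
      case F2: False then show ?thesis using Suc False by (intro exI[of _ b]) auto
    qed
  qed
qed

context
  fixes e :: real
  assumes e0: "0 < e" and e1: "e < 1" and eq: "e \<notin> \<rat>"
begin

lemma rem: "0 < cf_rem e k" "cf_rem e k < 1" using cf_rem_props[OF e0 e1 eq] by auto

lemma aa_ge1: "aa e k \<ge> 1"
proof -
  have "1 < 1 / cf_rem e k" using rem[of k] by simp
  then show ?thesis unfolding aa_def by linarith
qed

lemma Bt_pos: "Bt e k > 0" by (induction k) (auto simp: rem)
lemma Bt_dec: "Bt e (Suc k) \<le> Bt e k"
  using Bt_pos[of k] rem[of k] by (simp add: mult_left_le)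

lemma Bt_rec: "Bt e (Suc (Suc k)) = Bt e k - aa e k * Bt e (Suc k)"
proof -
  define r where "r = cf_rem e k"
  have r0: "r \<noteq> 0" using rem[of k] r_def by simp
  have "cf_rem e (Suc k) = 1/r - aa e k" by (simp add: r_def aa_def frac_def)
  then have "Bt e (Suc (Suc k)) = Bt e k * r * (1/r - aa e k)" by (simp add: r_def)
  also have "\<dots> = Bt e k - aa e k * (Bt e k * r)" using r0 by (simp add: algebra_simps)
  finally show ?thesis by (simp add: r_def)
qed

lemma Q_basic: "0 \<le> QQ e k \<and> QQ e k \<le> QQ e (Suc k) \<and> 1 \<le> QQ e (Suc k)"
proof (induction k)
  case 0 then show ?case by simp
next
  case (Suc k)
  have "aa e k * QQ e (Suc k) \<ge> QQ e (Suc k)" using aa_ge1[of k] Suc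
    by (metis mult_le_cancel_right1 not_le order.trans zero_le_one)
  then show ?case using Suc by (simp only: QQ.simps) linarith
qed

lemma Q_sum: "int k + 1 \<le> QQ e k + QQ e (Suc k)"
proof (induction k)
  case 0 then show ?case by simp
next
  case (Suc k)
  have "aa e k * QQ e (Suc k) \<ge> QQ e (Suc k)" using aa_ge1[of k] Q_basic[of k]
    by (metis mult_le_cancel_right1 not_le order.trans zero_le_one)
  then show ?case using Suc Q_basic[of k] by (simp only: QQ.simps) linarith
qed

lemma u_eq: "QQ e k * e - PP e k = (-1)^(k+1) * Bt e k \<and>
   QQ e (Suc k) * e - PP e (Suc k) = (-1)^(k+2) * Bt e (Suc k)"
proof (induction k)
  case 0 then show ?case by (simp)
next
  case (Suc k)
  have "QQ e (Suc (Suc k)) * e - PP e (Suc (Suc k))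
     = aa e k * (QQ e (Suc k) * e - PP e (Suc k)) + (QQ e k * e - PP e k)"
    by (simp add: algebra_simps)
  also have "\<dots> = (-1)^(k+1) * (Bt e k - aa e k * Bt e (Suc k))" using Suc by (simp add: algebra_simps)
  also have "\<dots> = (-1)^(Suc k + 2) * Bt e (Suc (Suc k))" by (subst Bt_rec) simp
  finally show ?case using Suc by simp
qed

lemma det: "QQ e (Suc k) * PP e k - QQ e k * PP e (Suc k) = (-1)^k"
proof (induction k)
  case 0 then show ?case by simp
next
  case (Suc k)
  have "QQ e (Suc (Suc k)) * PP e (Suc k) - QQ e (Suc k) * PP e (Suc (Suc k))
     = - (QQ e (Suc k) * PP e k - QQ e k * PP e (Suc k))" by (simp add: algebra_simps)
  then show ?case using Suc by simp
qed

lemma ident: "QQ e k * Bt e (Suc k) + QQ e (Suc k) * Bt e k = 1"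
proof (induction k)
  case 0 then show ?case by simp
next
  case (Suc k)
  have "QQ e (Suc k) * Bt e (Suc (Suc k)) + QQ e (Suc (Suc k)) * Bt e (Suc k)
      = QQ e k * Bt e (Suc k) + QQ e (Suc k) * Bt e k"
    by (simp only: Bt_rec QQ.simps) (simp add: algebra_simps)
  then show ?case using Suc by simp
qed


context
  fixes K :: nat
  assumes Kb: "\<And>j. aa e j \<le> int K"
begin

lemma Q_growth: "QQ e (Suc (Suc k)) \<le> (int K + 1) * QQ e (Suc k)"
proof -
  have "aa e k * QQ e (Suc k) \<le> int K * QQ e (Suc k)"
    using Kb[of k] Q_basic[of k] by (intro mult_right_mono) auto
  then show ?thesis using Q_basic[of k] by (simp only: QQ.simps distrib_right mult_1_left) linarith
qed

lemma LB:
  fixes q m :: int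
  assumes q1: "1 \<le> q"
  shows "\<bar>q * e - m\<bar> \<ge> 1 / ((K + 2) * q)"
proof -
  have big: "q < QQ e (Suc (2 * nat q))"
  proof -
    have "int (2 * nat q) + 1 \<le> QQ e (2 * nat q) + QQ e (Suc (2 * nat q))" by (rule Q_sum)
    moreover have "QQ e (2 * nat q) \<le> QQ e (Suc (2 * nat q))" using Q_basic by blast
    ultimately show ?thesis using q1 by linarith
  qed
  have "1 < Suc (2 * nat q)" using q1 by simp
  then obtain k where k: "1 \<le> k" "QQ e k \<le> q" "q < QQ e (Suc k)"
    using find_step[of 1 "Suc (2 * nat q)" "QQ e" q] big q1 by auto
  define D :: int where "D = (-1)^k"
  have DD: "D * D = 1" by (simp add: D_def flip: power_add) 
  have dt: "QQ e (Suc k) * PP e k - QQ e k * PP e (Suc k) = D" using det by (simp add: D_def)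
  define Aa where "Aa = -D * (q * PP e (Suc k) - m * QQ e (Suc k))"
  define Bb where "Bb = -D * (QQ e k * m - PP e k * q)"
  have hq: "q = Aa * QQ e k + Bb * QQ e (Suc k)"
  proof -
    have "Aa * QQ e k + Bb * QQ e (Suc k) = -D * q * (QQ e k * PP e (Suc k) - QQ e (Suc k) * PP e k)"
      by (simp add: Aa_def Bb_def algebra_simps)
    also have "\<dots> = D * D * q" using dt by (simp add: algebra_simps)
    finally show ?thesis using DD by simp
  qed
  have hm: "m = Aa * PP e k + Bb * PP e (Suc k)"
  proof -
    have "Aa * PP e k + Bb * PP e (Suc k) = -D * m * (QQ e k * PP e (Suc k) - QQ e (Suc k) * PP e k)"
      by (simp add: Aa_def Bb_def algebra_simps)
    also have "\<dots> = D * D * m" using dt by (simp add: algebra_simps)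
    finally show ?thesis using DD by simp
  qed
  have "real_of_int q * e - m = Aa * (QQ e k * e - PP e k) + Bb * (QQ e (Suc k) * e - PP e (Suc k))"
    by (subst hq, subst hm) (simp add: algebra_simps)
  also have "\<dots> = (-1)^(k+1) * (Aa * Bt e k - Bb * Bt e (Suc k))"
  proof -
    have u1: "QQ e k * e - PP e k = (-1)^(k+1) * Bt e k" using u_eq[of k] by blast
    have u2: "QQ e (Suc k) * e - PP e (Suc k) = (-1)^(k+2) * Bt e (Suc k)" using u_eq[of k] by blast
    show ?thesis by (simp only: u1 u2) (simp add: algebra_simps)
  qed
  finally have eqv: "\<bar>real_of_int q * e - m\<bar> = \<bar>Aa * Bt e k - Bb * Bt e (Suc k)\<bar>"
    by (simp add: abs_mult)
  have Qk0: "0 \<le> QQ e k" "QQ e k \<le> QQ e (Suc k)" using Q_basic by auto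
  have Qk1: "1 \<le> QQ e k" using Q_basic[of "k - 1"] k(1) by simp
  have bk: "Bt e k \<le> \<bar>Aa * Bt e k - Bb * Bt e (Suc k)\<bar>"
  proof (cases "Aa \<ge> 1")
    case True
    have "Bb \<le> 0"
    proof (rule ccontr)
      assume "\<not> Bb \<le> 0" then have "Bb \<ge> 1" by simp
      then have "Aa * QQ e k + Bb * QQ e (Suc k) \<ge> 1 * 0 + 1 * QQ e (Suc k)"
        using True Qk0 by (intro add_mono mult_mono) auto
      then show False using hq k by linarith
    qed
    have "real_of_int Aa * Bt e k \<ge> 1 * Bt e k" using True Bt_pos[of k]
      by (intro mult_right_mono) auto
    moreover have "real_of_int Bb * Bt e (Suc k) \<le> 0" using \<open>Bb \<le> 0\<close> Bt_pos[of "Suc k"]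
      by (simp add: mult_nonpos_nonneg)
    ultimately show ?thesis by linarith
  next
    case False
    have "Aa \<noteq> 0"
    proof
      assume "Aa = 0"
      then have "q = Bb * QQ e (Suc k)" using hq by simp
      then show False using k q1 Qk0
        by (smt (verit, best) mult_le_cancel_right1 mult_nonpos_nonneg)
    qed
    then have Aneg: "Aa \<le> -1" using False by linarith
    have "Bb \<ge> 0"
    proof (rule ccontr)
      assume "\<not> Bb \<ge> 0" then have "Bb \<le> -1" by simp
      then have "Aa * QQ e k + Bb * QQ e (Suc k) \<le> 0"
        using Aneg Qk0 by (smt (verit) mult_nonneg_nonneg mult_nonpos_nonneg)
      then show False using hq q1 by linarith
    qed
    have "real_of_int Aa * Bt e k \<le> -1 * Bt e k" using Aneg Bt_pos[of k]
      by (intro mult_right_mono) auto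
    moreover have "real_of_int Bb * Bt e (Suc k) \<ge> 0" using \<open>Bb \<ge> 0\<close> Bt_pos[of "Suc k"]
      by simp
    ultimately show ?thesis by linarith
  qed
  have "1 \<le> (QQ e k + QQ e (Suc k)) * Bt e k"
  proof -
    have "1 = QQ e k * Bt e (Suc k) + QQ e (Suc k) * Bt e k" using ident by simp
    also have "\<dots> \<le> QQ e k * Bt e k + QQ e (Suc k) * Bt e k"
      using Bt_dec[of k] Qk0 by (simp add: mult_left_mono)
    finally show ?thesis by (simp add: algebra_simps)
  qed
  also have "\<dots> \<le> ((K + 2) * QQ e k) * Bt e k"
  proof -
    have "QQ e (Suc k) \<le> (int K + 1) * QQ e k"
      using Q_growth[of "k - 1"] k(1) by (cases k) auto
    then have "QQ e k + QQ e (Suc k) \<le> (int K + 2) * QQ e k" by (simp add: algebra_simps)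
    then have "real_of_int (QQ e k + QQ e (Suc k)) \<le> real_of_int ((int K + 2) * QQ e k)"
      by (simp only: of_int_le_iff)
    then show ?thesis using Bt_pos[of k] by (intro mult_right_mono) (auto simp: add.commute)
  qed
  also have "\<dots> \<le> ((K + 2) * q) * Bt e k"
    using k(2) Bt_pos[of k] by (intro mult_right_mono) auto
  finally have "1 / ((K + 2) * q) \<le> Bt e k" using q1
    by (simp add: divide_le_eq mult.commute)
  then show ?thesis using eqv bk by linarith
qed


lemma DN:
  fixes M :: nat and t :: real
  assumes M1: "1 \<le> M"
  shows "\<exists>(j::int) (m::int). 0 \<le> j \<and> j < M \<and> \<bar>j * e - m - t\<bar> < (K + 2) / M"
proof -
  define f where "f k = QQ e k + QQ e (Suc k)" for k
  have "f 0 \<le> int M" using M1 by (simp add: f_def)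
  moreover have "int M < f M" using Q_sum[of M] by (simp add: f_def)
  ultimately obtain k where k: "f k \<le> int M" "int M < f (Suc k)"
    using find_step[of 0 M f "int M"] M1 by auto
  define D :: int where "D = (-1)^k"
  have D0: "real_of_int D \<noteq> 0" by (simp add: D_def)
  define u1 where "u1 = QQ e k * e - PP e k"
  define u2 where "u2 = QQ e (Suc k) * e - PP e (Suc k)"
  have u1e: "u1 = (-1)^(k+1) * Bt e k" using u_eq[of k] u1_def by blast
  have u2e: "u2 = - ((-1)^(k+1) * Bt e (Suc k))" using u_eq[of k] u2_def by simp
  have dt: "QQ e k * u2 - QQ e (Suc k) * u1 = D"
  proof -
    have "QQ e k * u2 - QQ e (Suc k) * u1 = real_of_int (QQ e (Suc k) * PP e k - QQ e k * PP e (Suc k))"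
      by (simp add: u1_def u2_def algebra_simps)
    then show ?thesis using det[of k] by (simp add: D_def)
  qed
  define X :: real where "X = QQ e k + QQ e (Suc k) - 1/2"
  define Ar where "Ar = (X * u2 - QQ e (Suc k) * t) / D"
  define Br where "Br = (QQ e k * t - u1 * X) / D"
  have eX: "Ar * QQ e k + Br * QQ e (Suc k) = X"
  proof -
    have "Ar * QQ e k + Br * QQ e (Suc k) = X * (QQ e k * u2 - QQ e (Suc k) * u1) / D"
      using D0 by (simp add: Ar_def Br_def field_simps)
    then show ?thesis using dt D0 by simp
  qed
  have et: "Ar * u1 + Br * u2 = t"
  proof -
    have "Ar * u1 + Br * u2 = t * (QQ e k * u2 - QQ e (Suc k) * u1) / D"
      using D0 by (simp add: Ar_def Br_def field_simps)
    then show ?thesis using dt D0 by simp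
  qed
  define j where "j = \<lfloor>Ar\<rfloor> * QQ e k + \<lfloor>Br\<rfloor> * QQ e (Suc k)"
  define m where "m = \<lfloor>Ar\<rfloor> * PP e k + \<lfloor>Br\<rfloor> * PP e (Suc k)"
  have jr: "real_of_int j = X - frac Ar * QQ e k - frac Br * QQ e (Suc k)"
    using eX by (simp add: j_def frac_def algebra_simps)
  have jm: "real_of_int j * e - m - t = - (frac Ar * u1 + frac Br * u2)"
    using et by (simp add: j_def m_def u1_def u2_def frac_def algebra_simps)
  have Qb: "0 \<le> QQ e k" "1 \<le> QQ e (Suc k)" using Q_basic by auto
  have fa: "0 \<le> frac Ar" "frac Ar < 1" "0 \<le> frac Br" "frac Br < 1" by (auto simp: frac_lt_1)
  have "frac Ar * QQ e k \<le> QQ e k" using fa Qb by (simp add: mult_left_le_one_le)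
  moreover have "frac Br * QQ e (Suc k) < QQ e (Suc k)" using fa Qb by simp
  ultimately have "real_of_int j > -1" using jr X_def by linarith
  then have j0: "0 \<le> j" by linarith
  have "frac Ar * QQ e k \<ge> 0" "frac Br * QQ e (Suc k) \<ge> 0" using fa Qb by auto
  then have "real_of_int j \<le> X" using jr by linarith
  then have "real_of_int j < f k" using X_def f_def by simp
  then have jM: "j < M" using k by linarith
  have "\<bar>real_of_int j * e - m - t\<bar> = \<bar>frac Ar * Bt e k - frac Br * Bt e (Suc k)\<bar>"
  proof -
    have "\<bar>real_of_int j * e - m - t\<bar> = \<bar>frac Ar * u1 + frac Br * u2\<bar>" by (simp only: jm abs_minus_cancel)
    also have "frac Ar * u1 + frac Br * u2 = (-1)^(k+1) * (frac Ar * Bt e k - frac Br * Bt e (Suc k))"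
      by (simp only: u1e u2e) (simp add: algebra_simps)
    finally show ?thesis by (simp only: abs_mult power_abs abs_neg_one power_one mult_1_left)
  qed
  also have "\<dots> < Bt e k"
  proof -
    have "frac Ar * Bt e k < Bt e k" using fa Bt_pos[of k] by simp
    moreover have "frac Br * Bt e (Suc k) < Bt e k" using fa Bt_pos[of "Suc k"] Bt_dec[of k]
    proof -
      have "frac Br * Bt e (Suc k) < 1 * Bt e (Suc k)"
        using fa Bt_pos[of "Suc k"] by (intro mult_strict_right_mono) auto
      then show ?thesis using Bt_dec[of k] by simp
    qed
    moreover have "frac Ar * Bt e k \<ge> 0" "frac Br * Bt e (Suc k) \<ge> 0"
      using fa Bt_pos[of k] Bt_pos[of "Suc k"] by auto
    ultimately show ?thesis by linarith
  qed
  also have "\<dots> \<le> 1 / QQ e (Suc k)"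
  proof -
    have "0 \<le> QQ e k * Bt e (Suc k)" using Qb Bt_pos[of "Suc k"] by simp
    then have "QQ e (Suc k) * Bt e k \<le> 1" using ident[of k] by linarith
    then show ?thesis using Qb by (simp add: le_divide_eq mult.commute)
  qed
  also have "\<dots> < (K + 2) / M"
  proof -
    have "int M < (int K + 2) * QQ e (Suc k)"
      using k(2) Q_growth[of k] by (simp add: f_def algebra_simps)
    then have "real_of_int (int M) < real_of_int ((int K + 2) * QQ e (Suc k))"
      by (simp only: of_int_less_iff)
    then have "real M < (real K + 2) * QQ e (Suc k)" by simp
    moreover have "real_of_int (QQ e (Suc k)) > 0" "real M > 0" using Qb M1 by auto
    ultimately show ?thesis by (simp add: divide_simps mult.commute add.commute)
  qed
  finally show ?thesis using j0 jM by blast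
qed

end
end


definition sh :: "real \<Rightarrow> letter \<Rightarrow> real" where
  "sh e X = (case X of A \<Rightarrow> 1 - e | B \<Rightarrow> 1 - 2*e | C \<Rightarrow> -e)"

lemma T_sh: "T3 e l x = x + sh e (code3 e l x)"
  by (simp add: T3_def code3_def sh_def)

context
  fixes e l :: real
  assumes e0: "0 < e" and e1: "e < 1" and le: "e < l" and le2: "1 - e < l" and l1: "l < 1"
begin

lemma T_range: "0 \<le> x \<Longrightarrow> x < l \<Longrightarrow> 0 \<le> T3 e l x \<and> T3 e l x < l"
  using e0 e1 le le2 l1 by (auto simp: T3_def)

lemma Tn_range: "0 \<le> x \<Longrightarrow> x < l \<Longrightarrow> 0 \<le> (T3 e l ^^ k) x \<and> (T3 e l ^^ k) x < l"
  by (induction k) (auto simp: T_range)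

lemma code_C: "0 \<le> x \<Longrightarrow> x < l \<Longrightarrow> (code3 e l x = C) = (e \<le> x)"
  using l1 by (auto simp: code3_def)

lemma code_convex: "0 \<le> a \<Longrightarrow> a \<le> b \<Longrightarrow> b \<le> c \<Longrightarrow> code3 e l a = code3 e l c \<Longrightarrow> code3 e l b = code3 e l a"
  by (auto simp: code3_def split: if_splits)

lemma shift_form: "\<exists>(m::int) (q::int). (T3 e l ^^ k) x - x = m - q * e \<and> int k \<le> q \<and> q \<le> 2 * int k"
proof (induction k)
  case 0 then show ?case by (intro exI[of _ 0]) simp
next
  case (Suc k)
  then obtain m q :: int where mq: "(T3 e l ^^ k) x - x = m - q * e" "int k \<le> q" "q \<le> 2 * int k" by blast
  define y where "y = (T3 e l ^^ k) x"
  have eq: "(T3 e l ^^ Suc k) x - x = (y - x) + sh e (code3 e l y)" by (simp add: y_def T_sh)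
  have yx: "y - x = m - q * e" using mq y_def by simp
  show ?case
  proof (cases "code3 e l y")
    case A
    have "(T3 e l ^^ Suc k) x - x = of_int (m+1) - of_int (q+1) * e" unfolding eq yx A sh_def by (simp add: algebra_simps)
    then show ?thesis using mq(2,3) by (intro exI[of _ "m+1"] exI[of _ "q+1"]) simp
  next
    case B
    have "(T3 e l ^^ Suc k) x - x = of_int (m+1) - of_int (q+2) * e" unfolding eq yx B sh_def by (simp add: algebra_simps)
    then show ?thesis using mq(2,3) by (intro exI[of _ "m+1"] exI[of _ "q+2"]) simp
  next
    case C
    have "(T3 e l ^^ Suc k) x - x = of_int (m) - of_int (q+1) * e" unfolding eq yx C sh_def by (simp add: algebra_simps)
    then show ?thesis using mq(2,3) by (intro exI[of _ "m"] exI[of _ "q+1"]) simp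
  qed
qed

lemma transl:
  assumes y: "0 \<le> y" "y < l" and z: "0 \<le> z" "z < l"
    and cd: "\<forall>k<N. code3 e l ((T3 e l ^^ k) y) = code3 e l ((T3 e l ^^ k) z)"
    and w: "min y z \<le> w" "w \<le> max y z"
  shows "k \<le> N \<Longrightarrow> (T3 e l ^^ k) w = w + ((T3 e l ^^ k) y - y)"
  using w
proof (induction k arbitrary: w)
  case 0 then show ?case by simp
next
  case (Suc k)
  define D where "D = (T3 e l ^^ k) y - y"
  have kN: "k \<le> N" and w1: "min y z \<le> w" and w2: "w \<le> max y z" using Suc.prems by auto
  have hw: "(T3 e l ^^ k) w = w + D" using Suc.IH[of w] kN w1 w2 D_def by simp
  have "min y z \<le> z" "z \<le> max y z" by auto
  then have hz: "(T3 e l ^^ k) z = z + D" using Suc.IH[of z] kN D_def by simp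
  have ry: "0 \<le> (T3 e l ^^ k) y" "(T3 e l ^^ k) y < l" using Tn_range y by auto
  have rz: "0 \<le> (T3 e l ^^ k) z" "(T3 e l ^^ k) z < l" using Tn_range z by auto
  have ck: "code3 e l ((T3 e l ^^ k) y) = code3 e l ((T3 e l ^^ k) z)" using cd Suc.prems by auto
  have cw: "code3 e l ((T3 e l ^^ k) w) = code3 e l ((T3 e l ^^ k) y)"
  proof (cases "y \<le> z")
    case True
    have "(T3 e l ^^ k) y \<le> (T3 e l ^^ k) w" "(T3 e l ^^ k) w \<le> (T3 e l ^^ k) z"
      using hw hz True w1 w2 D_def by auto
    then show ?thesis using code_convex[of "(T3 e l ^^ k) y" "(T3 e l ^^ k) w" "(T3 e l ^^ k) z"]
      ck ry by simp
  next
    case False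
    have "(T3 e l ^^ k) z \<le> (T3 e l ^^ k) w" "(T3 e l ^^ k) w \<le> (T3 e l ^^ k) y"
      using hw hz False w1 w2 D_def by auto
    then show ?thesis using code_convex[of "(T3 e l ^^ k) z" "(T3 e l ^^ k) w" "(T3 e l ^^ k) y"]
      ck rz by simp
  qed
  have "(T3 e l ^^ Suc k) w = (T3 e l ^^ k) w + sh e (code3 e l ((T3 e l ^^ k) w))" by (simp add: T_sh)
  also have "\<dots> = w + D + sh e (code3 e l ((T3 e l ^^ k) y))" using hw cw by simp
  also have "\<dots> = w + ((T3 e l ^^ Suc k) y - y)" by (simp add: T_sh D_def)
  finally show ?case .
qed

lemma orbit: "0 \<le> x \<Longrightarrow> x < l \<Longrightarrow> frac (x - real n * e) = e \<Longrightarrow> \<exists>i\<le>n. (T3 e l ^^ i) x = e"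
proof (induction n arbitrary: x rule: less_induct)
  case (less n)
  show ?case
  proof (cases n)
    case 0
    then have "frac x = e" using less by simp
    moreover have "frac x = x" using less l1 by (simp add: frac_eq)
    ultimately show ?thesis by (intro exI[of _ 0]) simp
  next
    case (Suc n')
    show ?thesis
    proof (cases "e \<le> x")
      case True
      have T: "T3 e l x = x - e" using True less l1 by (simp add: T3_def)
      have "frac ((x - e) - real n' * e) = e" using less Suc by (simp add: algebra_simps)
      moreover have "n' < n" "0 \<le> x - e" "x - e < l" using Suc True less e0 by auto
      ultimately obtain i where "i \<le> n'" "(T3 e l ^^ i) (x - e) = e"
        using less.IH[of n' "x - e"] by blast
      then show ?thesis using T Suc by (intro exI[of _ "Suc i"]) (simp only: funpow_Suc_right comp_def, simp)
    next
      case F1: False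
      show ?thesis
      proof (cases "x < l - 1 + e")
        case True
        have T: "T3 e l x = x + 1 - e" using True less by (simp add: T3_def)
        have "frac ((x + 1 - e) - real n' * e) = frac ((x - real n * e) + 1)" using Suc by (simp add: algebra_simps)
        also have "\<dots> = e" using less by (simp add: frac_1_eq)
        finally have fr: "frac ((x + 1 - e) - real n' * e) = e" .
        have "n' < n" "0 \<le> x + 1 - e" "x + 1 - e < l" using Suc True less F1 le2 e1 by auto
        then obtain i where "i \<le> n'" "(T3 e l ^^ i) (x + 1 - e) = e"
          using less.IH[of n' "x + 1 - e"] fr by blast
        then show ?thesis using T Suc by (intro exI[of _ "Suc i"]) (simp only: funpow_Suc_right comp_def, simp)
      next
        case F2: False
        have T: "T3 e l x = x + 1 - 2 * e" using F1 F2 less by (simp add: T3_def)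
        show ?thesis
        proof (cases n')
          case 0
          have "frac (x - e) = x - e + 1" using F1 less e0 e1 
            by (subst frac_unique_iff) (auto simp: Ints_1) 
          then show ?thesis using less Suc 0 F2 le by simp
        next
          case (Suc n'')
          have "frac ((x + 1 - 2 * e) - real n'' * e) = frac ((x - real n * e) + 1)"
            using Suc \<open>n = Suc n'\<close> by (simp add: algebra_simps)
          also have "\<dots> = e" using less by (simp add: frac_1_eq)
          finally have fr: "frac ((x + 1 - 2 * e) - real n'' * e) = e" .
          have "n'' < n" "0 \<le> x + 1 - 2 * e" "x + 1 - 2 * e < l"
            using Suc \<open>n = Suc n'\<close> F1 F2 less le le2 by auto
          then obtain i where "i \<le> n''" "(T3 e l ^^ i) (x + 1 - 2 * e) = e"
            using less.IH[of n'' "x + 1 - 2 * e"] fr by blast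
          then show ?thesis using T Suc \<open>n = Suc n'\<close>
            by (intro exI[of _ "Suc i"]) (simp only: funpow_Suc_right comp_def, simp)
        qed
      qed
    qed
  qed
qed


end


lemma key:
  fixes eps l x0 :: real and K :: nat
  assumes e0: "0 < eps" and e1: "eps < 1" and eq: "eps \<notin> \<rat>"
    and le: "eps < l" and le2: "1 - eps < l" and l1: "l < 1"
    and x0: "0 \<le> x0" "x0 < l"
    and Kb: "\<And>j. aa eps j \<le> int K"
    and wne: "w \<noteq> []" and fac: "is_factor (iet_word eps l x0) v" and pw: "is_power v w r"
  shows "real_of_rat r < 1 + 4 * (real K + 2)^2"
proof (rule ccontr)
  define Bnd :: real where "Bnd = 1 + 4 * (real K + 2)^2"
  assume "\<not> real_of_rat r < 1 + 4 * (real K + 2)^2"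
  then have rb: "real_of_rat r \<ge> Bnd" by (simp add: Bnd_def)
  define u where "u = iet_word eps l x0"
  define T where "T = T3 eps l"
  obtain i where v: "v = map u [i..<i + length v]" using fac by (auto simp: is_factor_def u_def)
  define p where "p = length w"
  define n where "n = length v"
  have p1: "1 \<le> p" using wne by (simp add: p_def Suc_le_eq)
  have pn: "p \<le> n" and rr: "r = of_nat n / of_nat p"
    and per: "\<forall>k<n. v ! k = w ! (k mod p)" using pw by (auto simp: is_power_def p_def n_def)
  have "real_of_rat r = real n / real p" by (simp add: rr of_rat_divide)
  then have "real n \<ge> Bnd * real p" using rb p1 by (simp add: le_divide_eq)
  define M where "M = n - p"
  have KK: "(real K + 2) > 0" by simp
  have Mb: "real M \<ge> 4 * (real K + 2)^2 * real p"
    using \<open>real n \<ge> Bnd * real p\<close> pn by (simp add: M_def Bnd_def algebra_simps of_nat_diff)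
  have M1: "1 \<le> M"
  proof -
    have h1: "1 \<le> (real K + 2)^2" by (rule one_le_power) simp
    have h2: "1 \<le> real p" using p1 by simp
    have "1 * 1 \<le> (real K + 2)^2 * real p" using h1 h2 by (intro mult_mono) auto
    then have "4 * (real K + 2)^2 * real p \<ge> 1" by simp
    then show ?thesis using Mb by linarith
  qed
  define y where "y = (T ^^ i) x0"
  define z where "z = (T ^^ p) y"
  have ctx: "0 < eps" "eps < 1" "eps < l" "1 - eps < l" "l < 1" using e0 e1 le le2 l1 by auto
  have ry: "0 \<le> y" "y < l" using Tn_range[OF ctx x0] by (auto simp: y_def T_def)
  have rz: "0 \<le> z" "z < l" using Tn_range[OF ctx ry] by (auto simp: z_def T_def)
  have uk: "u (i + k) = code3 eps l ((T ^^ k) y)" for k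
  proof -
    have "i + k = k + i" by simp
    then show ?thesis unfolding u_def iet_word_def y_def T_def by (simp only: funpow_add comp_def)
  qed
  have uk2: "u (i + (k + p)) = code3 eps l ((T ^^ k) z)" for k
  proof -
    have "i + (k + p) = k + (p + i)" by simp
    then show ?thesis unfolding u_def iet_word_def y_def z_def T_def by (simp only: funpow_add comp_def)
  qed
  have cd: "\<forall>k<M. code3 eps l ((T ^^ k) y) = code3 eps l ((T ^^ k) z)"
  proof (intro allI impI)
    fix k assume "k < M"
    then have kn: "k < n" "k + p < n" using M_def pn by auto
    have vn: "v = map u [i..<i+n]" using v unfolding n_def .
    have "v ! k = u (i + k)" using kn by (simp only: vn) simp
    moreover have "v ! (k + p) = u (i + (k + p))" using kn by (simp only: vn) simp
    moreover have "v ! k = v ! (k + p)" using per kn by simp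
    ultimately show "code3 eps l ((T ^^ k) y) = code3 eps l ((T ^^ k) z)" using uk uk2 by metis
  qed
  obtain m q :: int where mq: "(T ^^ p) y - y = m - q * eps" "int p \<le> q" "q \<le> 2 * int p"
    using shift_form[OF ctx, of p y] by (auto simp: T_def)
  have q1: "1 \<le> q" using mq p1 by linarith
  have LBq: "\<bar>q * eps - m\<bar> \<ge> 1 / ((K + 2) * q)" using LB[OF e0 e1 eq Kb q1] .
  have "1 / ((real K + 2) * (2 * real p)) \<le> 1 / ((K + 2) * q)"
  proof -
    have "real_of_int q \<le> 2 * real p" using mq(3) by linarith
    then have "(real K + 2) * real_of_int q \<le> (real K + 2) * (2 * real p)" by simp
    moreover have "(real K + 2) * real_of_int q > 0" using q1 by simp
    moreover have "0 < (real K + 2) * (2 * real p)" using p1 by simp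
    ultimately have "1/((real K+2)*(2*real p)) \<le> 1/((real K+2)*real_of_int q)"
      by (intro divide_left_mono) auto
    then show ?thesis by (simp add: add.commute)
  qed
  moreover have "z - y = -(q*eps - m)" using mq(1) z_def by simp
  then have "\<bar>z - y\<bar> = \<bar>q*eps - m\<bar>" by (simp only: abs_minus_cancel)
  ultimately have dlb: "\<bar>z - y\<bar> \<ge> 1 / ((real K + 2) * (2 * real p))"
    using LBq by linarith
  obtain j m' :: int where jm: "0 \<le> j" "j < int M" "\<bar>j * eps - m' - (y + z) / 2\<bar> < (K + 2) / M"
    using DN[OF e0 e1 eq Kb M1, of "(y + z) / 2"] by auto
  have "(real K + 2) / real M \<le> 1 / (4 * (real K + 2) * real p)"
  proof -
    have pos: "0 < 4 * (real K + 2) * real p" using p1 by simp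
    have "(real K + 2) * (4 * (real K + 2) * real p) = 4 * (real K + 2)^2 * real p"
      by (simp only: power2_eq_square mult.assoc mult.left_commute)
    then have "(real K + 2) * (4 * (real K + 2) * real p) \<le> real M" using Mb by linarith
    then show ?thesis using pos M1 by (simp add: divide_simps)
  qed
  also have "\<dots> = (1 / ((real K + 2) * (2 * real p))) / 2" by simp
  also have "\<dots> \<le> \<bar>z - y\<bar> / 2" by (rule divide_right_mono[OF dlb]) simp
  finally have fin: "(real K + 2) / real M \<le> \<bar>z - y\<bar> / 2" .
  have jm3: "\<bar>j * eps - m' - (y + z) / 2\<bar> < (real K + 2) / real M" using jm(3) by (simp add: add.commute)
  have close: "\<bar>j * eps - m' - (y + z) / 2\<bar> < \<bar>z - y\<bar> / 2" using jm3 fin by linarith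
  define w0 where "w0 = j * eps - m'"
  have cl: "\<bar>w0 - (y + z) / 2\<bar> < \<bar>z - y\<bar> / 2" using close by (simp add: w0_def)
  have w0in: "min y z < w0 \<and> w0 < max y z"
  proof (cases "y \<le> z")
    case True
    then have h: "\<bar>z - y\<bar> = z - y" by simp
    have a1: "w0 - (y+z)/2 < (z-y)/2" "(y+z)/2 - w0 < (z-y)/2"
      using cl unfolding h abs_less_iff by auto
    have "y < w0" "w0 < z" using a1 by (simp_all add: field_simps)
    then show ?thesis using True by (simp add: min_def max_def)
  next
    case False
    then have h: "\<bar>z - y\<bar> = y - z" by simp
    have a1: "w0 - (y+z)/2 < (y-z)/2" "(y+z)/2 - w0 < (y-z)/2"
      using cl unfolding h abs_less_iff by auto
    have "z < w0" "w0 < y" using a1 by (simp_all add: field_simps)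
    then show ?thesis using False by (simp add: min_def max_def)
  qed
  have w0r: "0 < w0" "w0 < l" using w0in ry rz by auto
  have j1: "1 \<le> j"
  proof (rule ccontr)
    assume "\<not> 1 \<le> j" then have "j = 0" using jm by simp
    then have "w0 = - m'" by (simp add: w0_def)
    then have "real_of_int (- m') > 0" "real_of_int (- m') < 1" using w0r l1 by auto
    then have "- m' > 0" "- m' < 1" by simp_all
    then show False by simp
  qed
  define jn where "jn = nat (j - 1)"
  have jnr: "real jn = real_of_int j - 1" using j1 by (simp add: jn_def)
  have "w0 - real jn * eps = eps + of_int (- m')" unfolding jnr by (simp add: w0_def algebra_simps)
  then have "frac (w0 - real jn * eps) = frac (eps + of_int (- m'))" by simp
  also have "\<dots> = eps" using e0 e1 by (simp only: frac_add_of_int_right) (simp add: frac_eq)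
  finally obtain i' where i': "i' \<le> jn" "(T ^^ i') w0 = eps"
    using orbit[OF ctx, of w0 jn] w0r by (auto simp: T_def)
  have iM: "i' < M" using i' jm j1 jn_def by linarith
  have cd3: "\<forall>k<M. code3 eps l ((T3 eps l ^^ k) y) = code3 eps l ((T3 eps l ^^ k) z)"
    using cd unfolding T_def .
  have tr: "(T ^^ i') x = x + ((T ^^ i') y - y)" if "min y z \<le> x" "x \<le> max y z" for x
    unfolding T_def using transl[OF ctx ry rz cd3 that less_imp_le[OF iM]] .
  have a: "(T ^^ i') (min y z) < eps" "eps < (T ^^ i') (max y z)"
  proof -
    have mm: "min y z \<le> max y z" by simp
    have h1: "(T ^^ i') (min y z) = min y z + ((T ^^ i') y - y)" using tr[OF order.refl mm] .
    have h2: "(T ^^ i') (max y z) = max y z + ((T ^^ i') y - y)" using tr[OF mm order.refl] .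
    have h3: "(T ^^ i') w0 = w0 + ((T ^^ i') y - y)" using tr[of w0] w0in by simp
    show "(T ^^ i') (min y z) < eps" "eps < (T ^^ i') (max y z)"
      using h1 h2 h3 i'(2) w0in by linarith+
  qed
  have cdi: "code3 eps l ((T ^^ i') y) = code3 eps l ((T ^^ i') z)" using cd iM by blast
  have rmin: "0 \<le> (T ^^ i') (min y z)" "(T ^^ i') (min y z) < l"
    using Tn_range[OF ctx, of "min y z" i'] ry rz by (auto simp: T_def)
  have rmax: "0 \<le> (T ^^ i') (max y z)" "(T ^^ i') (max y z) < l"
    using Tn_range[OF ctx, of "max y z" i'] ry rz by (auto simp: T_def)
  have "code3 eps l ((T ^^ i') (min y z)) \<noteq> C" using code_C[OF ctx rmin] a by (simp add: T_def)
  moreover have "code3 eps l ((T ^^ i') (max y z)) = C" using code_C[OF ctx rmax] a by (simp add: T_def)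
  ultimately show False using cdi by (cases "y \<le> z") (auto simp: min_def max_def)
qed


theorem proposition1:
  fixes eps l x0 :: real
  assumes "0 < eps" "eps < 1" "eps \<notin> \<rat>"
    and "max eps (1 - eps) < l" "l < 1"
    and "0 \<le> x0" "x0 < l"
    and "ind_inf (iet_word eps l x0) = \<infinity>"
  shows "(SUP n\<in>{1..}. ereal (real_of_int (cf_pq eps n))) = \<infinity>"
proof (rule ccontr)
  define S where "S = (SUP n\<in>{1..}. ereal (real_of_int (cf_pq eps n)))"
  assume "\<not> (SUP n\<in>{1..}. ereal (real_of_int (cf_pq eps n))) = \<infinity>"
  then have ne: "S \<noteq> \<infinity>" by (simp add: S_def)
  have le1: "ereal (real_of_int (cf_pq eps n)) \<le> S" if "1 \<le> n" for n
    unfolding S_def by (rule SUP_upper) (use that in auto)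
  have "S \<noteq> -\<infinity>" using le1[of 1] by auto
  then obtain s where Ss: "S = ereal s" using ne by (cases S) auto
  define K where "K = nat \<lceil>s\<rceil>"
  have Kb: "aa eps j \<le> int K" for j
  proof -
    have "aa eps j = cf_pq eps (Suc j)" by (simp add: aa_def cf_pq_def)
    moreover have "real_of_int (cf_pq eps (Suc j)) \<le> s" using le1[of "Suc j"] Ss by simp
    then have "cf_pq eps (Suc j) \<le> \<lceil>s\<rceil>" by (simp add: le_ceiling_iff)
    ultimately show ?thesis unfolding K_def by linarith
  qed
  have el: "eps < l" "1 - eps < l" using assms(4) by auto
  define Bnd :: real where "Bnd = 1 + 4 * (real K + 2)^2"
  have "ind_inf (iet_word eps l x0) \<le> ereal Bnd"
    unfolding ind_inf_def
  proof (rule Sup_least)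
    fix x assume "x \<in> {ind_word (iet_word eps l x0) w |w. w \<noteq> [] \<and> is_factor (iet_word eps l x0) w}"
    then obtain w where x: "x = ind_word (iet_word eps l x0) w" by auto
    show "x \<le> ereal Bnd" unfolding x ind_word_def
    proof (rule Sup_least)
      fix y assume "y \<in> {ereal (real_of_rat r) |r. \<exists>v. is_factor (iet_word eps l x0) v \<and> is_power v w r}"
      then obtain r v where y: "y = ereal (real_of_rat r)" and fv: "is_factor (iet_word eps l x0) v" "is_power v w r" by auto
      have "w \<noteq> []" using fv(2) by (simp add: is_power_def)
      then have "real_of_rat r < Bnd" unfolding Bnd_def
        using key[OF assms(1,2,3) el assms(5,6,7) Kb _ fv] by blast
      then show "y \<le> ereal Bnd" using y by simp
    qed
  qed
  then show False using assms(8) by simp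
qed


end
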